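(* The Koszul dual operad of the operad of differential dendriform algebras of weight zero is the operad of diassociative algebras $(D,\dashv,\vdash)$ equipped with one linear operator $\partial:D\to D$ lying in the centroid and satisfying $\partial^2=0$, i.e. $\partial(a\ast b)=\partial(a)\ast b=a\ast\partial(b)$ for all $a,b\in D$ and $\ast\in\{\dashv,\vdash\}$, and $\partial\circ\partial=0$.
   Context: $\mathbf{k}$ is a commutative unital ring (a field for Koszul duality). The operad of differential dendriform algebras of weight zero is the (nonsymmetric, quadratic) operad generated by two binary operations $\prec,\succ$ and one unary operation $d$, subject to the dendriform relations $(a\prec b)\prec c=a\prec(b\prec c+b\succ c)$, $(a\succ b)\prec c=a\succ(b\prec c)$, $(a\prec b+a\succ b)\succ c=a\succ(b\succ c)$ and the Leibniz relations $d(a\prec b)=d(a)\prec b+a\prec d(b)$, $d(a\succ b)=d(a)\succ b+a\succ d(b)$. Koszul duality of operads is in the sense of Ginzburg–Kapranov/Loday–Vallette. A diassociative algebra is a $\mathbf{k}$-module $D$ with bilinear operations $\dashv,\vdash$ such that for all $a,b,c$: $(a\dashv b)\dashv c=a\dashv(b\dashv c)$, $(a\dashv b)\dashv c=a\dashv(b\vdash c)$, $(a\vdash b)\dashv c=a\vdash(b\dashv c)$, $(a\dashv b)\vdash c=a\vdash(b\vdash c)$, $(a\vdash b)\vdash c=a\vdash(b\vdash c)$. *)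

theory Defs
  imports Main "HOL-Library.Function_Algebras"
begin

text \<open>Nonsymmetric quadratic operads generated by one unary operation and two binary
operations.  The binary generators are indexed by \<open>bop\<close>; the unary generator is
implicit.  For the dendriform side: Lt = prec, Rt = succ, unary = d.  For the dual
side (dual basis): Lt = dashv, Rt = vdash, unary = partial.\<close>

datatype bop = Lt | Rt

text \<open>Basis of the weight-2 part T(E)^(2) of the free ns operad on E:
  DD       = d o d                        (arity 1)
  DB m     = d o m          : d(a m b)     (arity 2)
  BD1 m    = m o_1 d        : (d a) m b    (arity 2)
  BD2 m    = m o_2 d        : a m (d b)    (arity 2)
  C1 m n   = m o_1 n        : (a n b) m c  (arity 3)
  C2 m n   = m o_2 n        : a m (b n c)  (arity 3)\<close>

datatype tree = DD | DB bop | BD1 bop | BD2 bop | C1 bop bop | C2 bop bop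

definition all_trees :: "tree list" where
  "all_trees = [DD, DB Lt, DB Rt, BD1 Lt, BD1 Rt, BD2 Lt, BD2 Rt,
     C1 Lt Lt, C1 Lt Rt, C1 Rt Lt, C1 Rt Rt, C2 Lt Lt, C2 Lt Rt, C2 Rt Lt, C2 Rt Rt]"

type_synonym 'k wt2 = "tree \<Rightarrow> 'k"

definition basis_vec :: "tree \<Rightarrow> 'k::field wt2" ("\<langle>_\<rangle>") where
  "\<langle>t\<rangle> = (\<lambda>s. if s = t then 1 else 0)"

definition span_list :: "'k::field wt2 list \<Rightarrow> 'k wt2 set" where
  "span_list vs = {(\<lambda>t. \<Sum>i<length vs. c i * (vs ! i) t) | c. True}"

text \<open>Sign of the Koszul-duality pairing on basis trees (ns convention of
Loday / Loday--Vallette, with the unary dual generator being suspended):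
+1 on compositions m o_1 n and d o m and d o d, -1 on m o_2 n and m o_i d.\<close>
definition kd_sign :: "tree \<Rightarrow> 'k::field" where
  "kd_sign t = (case t of C2 _ _ \<Rightarrow> -1 | BD1 _ \<Rightarrow> -1 | BD2 _ \<Rightarrow> -1 | _ \<Rightarrow> 1)"

definition kd_pairing :: "'k::field wt2 \<Rightarrow> 'k wt2 \<Rightarrow> 'k" where
  "kd_pairing x y = (\<Sum>t\<leftarrow>all_trees. kd_sign t * x t * y t)"

definition orth :: "'k::field wt2 set \<Rightarrow> 'k wt2 set" where
  "orth R = {y. \<forall>x\<in>R. kd_pairing x y = 0}"

definition diffdend_rels :: "'k::field wt2 list" where
  "diffdend_rels =
    [ \<langle>C1 Lt Lt\<rangle> - \<langle>C2 Lt Lt\<rangle> - \<langle>C2 Lt Rt\<rangle>,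
      \<langle>C1 Lt Rt\<rangle> - \<langle>C2 Rt Lt\<rangle>,
      \<langle>C1 Rt Lt\<rangle> + \<langle>C1 Rt Rt\<rangle> - \<langle>C2 Rt Rt\<rangle>,
      \<langle>DB Lt\<rangle> - \<langle>BD1 Lt\<rangle> - \<langle>BD2 Lt\<rangle>,
      \<langle>DB Rt\<rangle> - \<langle>BD1 Rt\<rangle> - \<langle>BD2 Rt\<rangle> ]"

definition koszul_dual_rels :: "'k::field wt2 list \<Rightarrow> 'k wt2 set" where
  "koszul_dual_rels R = orth (span_list R)"

definition dias_centroid_sq0_rels :: "'k::field wt2 list" where
  "dias_centroid_sq0_rels =
    [ \<langle>C1 Lt Lt\<rangle> - \<langle>C2 Lt Lt\<rangle>,
      \<langle>C1 Lt Lt\<rangle> - \<langle>C2 Lt Rt\<rangle>,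
      \<langle>C1 Lt Rt\<rangle> - \<langle>C2 Rt Lt\<rangle>,
      \<langle>C1 Rt Lt\<rangle> - \<langle>C2 Rt Rt\<rangle>,
      \<langle>C1 Rt Rt\<rangle> - \<langle>C2 Rt Rt\<rangle>,
      \<langle>DB Lt\<rangle> - \<langle>BD1 Lt\<rangle>, \<langle>DB Lt\<rangle> - \<langle>BD2 Lt\<rangle>,
      \<langle>DB Rt\<rangle> - \<langle>BD1 Rt\<rangle>, \<langle>DB Rt\<rangle> - \<langle>BD2 Rt\<rangle>,
      \<langle>DD\<rangle> ]"

end

theory Submission
  imports Defs
begin

lemma pairing_add: "kd_pairing (\<lambda>t. f t + a * g t) y = kd_pairing f y + a * kd_pairing g y"
  by (simp add: kd_pairing_def all_trees_def algebra_simps)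

lemma pairing_zero: "kd_pairing (\<lambda>t. 0) y = 0"
  by (simp add: kd_pairing_def all_trees_def)

lemma pairing_lin:
  "kd_pairing (\<lambda>t. \<Sum>i<n. c i * (vs ! i) t) y = (\<Sum>i<n. c i * kd_pairing (vs ! i) y)"
proof (induction n)
  case 0
  then show ?case by (simp add: pairing_zero)
next
  case (Suc n)
  have "kd_pairing (\<lambda>t. \<Sum>i<Suc n. c i * (vs ! i) t) y
      = kd_pairing (\<lambda>t. (\<Sum>i<n. c i * (vs ! i) t) + c n * (vs ! n) t) y" by simp
  also have "\<dots> = (\<Sum>i<n. c i * kd_pairing (vs ! i) y) + c n * kd_pairing (vs ! n) y"
    by (simp only: pairing_add Suc.IH)
  finally show ?case by simp
qed

lemma in_span: "k < length vs \<Longrightarrow> vs ! k \<in> span_list vs"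
  unfolding span_list_def
  apply (rule CollectI, rule exI[where x="\<lambda>i. if i = k then 1 else 0"])
  apply (rule conjI[OF _ TrueI])
  apply (rule ext)
  subgoal for t
  proof -
    assume k: "k < length vs"
    have "(\<Sum>i<length vs. (if i = k then 1 else 0) * (vs ! i) t) = (\<Sum>i<length vs. if i = k then (vs ! i) t else 0)"
      by (rule sum.cong) auto
    also have "\<dots> = (vs ! k) t" using k by (simp add: sum.delta)
    finally show ?thesis by simp
  qed
  done

lemma orth_span: "orth (span_list vs) = {y. \<forall>k<length vs. kd_pairing (vs ! k) y = 0}"
proof (intro set_eqI iffI)
  fix y assume "y \<in> orth (span_list vs)"
  then show "y \<in> {y. \<forall>k<length vs. kd_pairing (vs ! k) y = 0}"
    using in_span unfolding orth_def by blast
next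
  fix y assume "y \<in> {y. \<forall>k<length vs. kd_pairing (vs ! k) y = 0}"
  then show "y \<in> orth (span_list vs)"
    unfolding orth_def span_list_def by (auto simp: pairing_lin)
qed

lemma pair_vals:
  fixes y :: "'k::field wt2"
  shows "kd_pairing ((diffdend_rels :: 'k wt2 list) ! 0) y = y (C1 Lt Lt) + y (C2 Lt Lt) + y (C2 Lt Rt)"
    "kd_pairing ((diffdend_rels :: 'k wt2 list) ! 1) y = y (C1 Lt Rt) + y (C2 Rt Lt)"
    "kd_pairing ((diffdend_rels :: 'k wt2 list) ! 2) y = y (C1 Rt Lt) + y (C1 Rt Rt) + y (C2 Rt Rt)"
    "kd_pairing ((diffdend_rels :: 'k wt2 list) ! 3) y = y (DB Lt) + y (BD1 Lt) + y (BD2 Lt)"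
    "kd_pairing ((diffdend_rels :: 'k wt2 list) ! 4) y = y (DB Rt) + y (BD1 Rt) + y (BD2 Rt)"
  by (simp_all add: diffdend_rels_def kd_pairing_def all_trees_def kd_sign_def basis_vec_def
      algebra_simps)

lemma all_less5: "(\<forall>k<5. P (k::nat)) \<longleftrightarrow> P 0 \<and> P 1 \<and> P 2 \<and> P 3 \<and> P 4"
  by (auto simp: eval_nat_numeral less_Suc_eq)

lemma orth_char:
  fixes y :: "'k::field wt2"
  shows "y \<in> koszul_dual_rels diffdend_rels \<longleftrightarrow>
   y (C1 Lt Lt) + y (C2 Lt Lt) + y (C2 Lt Rt) = 0 \<and>
   y (C1 Lt Rt) + y (C2 Rt Lt) = 0 \<and>
   y (C1 Rt Lt) + y (C1 Rt Rt) + y (C2 Rt Rt) = 0 \<and>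
   y (DB Lt) + y (BD1 Lt) + y (BD2 Lt) = 0 \<and>
   y (DB Rt) + y (BD1 Rt) + y (BD2 Rt) = 0"
proof -
  have l: "length (diffdend_rels :: 'k wt2 list) = 5" by (simp add: diffdend_rels_def)
  show ?thesis
    unfolding koszul_dual_rels_def orth_span mem_Collect_eq l all_less5 pair_vals ..
qed

lemma solve3: "(a::'a::ab_group_add) + b + c = 0 \<Longrightarrow> a = - b - c"
  by (metis add.commute add_diff_cancel_left' diff_0 diff_diff_eq)

lemma solve2: "(a::'a::ab_group_add) + b = 0 \<Longrightarrow> a = - b"
  by (simp add: eq_neg_iff_add_eq_0)

lemma tree_all: "(\<forall>t. P t) \<longleftrightarrow> P DD \<and> P (DB Lt) \<and> P (DB Rt) \<and> P (BD1 Lt) \<and> P (BD1 Rt)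
   \<and> P (BD2 Lt) \<and> P (BD2 Rt) \<and> P (C1 Lt Lt) \<and> P (C1 Lt Rt) \<and> P (C1 Rt Lt) \<and> P (C1 Rt Rt)
   \<and> P (C2 Lt Lt) \<and> P (C2 Lt Rt) \<and> P (C2 Rt Lt) \<and> P (C2 Rt Rt)"
  apply (rule iffI, blast)
  apply (rule allI)
  subgoal for t by (cases t; metis bop.exhaust)
  done

lemma span_char:
  fixes y :: "'k::field wt2"
  shows "y \<in> span_list dias_centroid_sq0_rels \<longleftrightarrow>
   y (C1 Lt Lt) + y (C2 Lt Lt) + y (C2 Lt Rt) = 0 \<and>
   y (C1 Lt Rt) + y (C2 Rt Lt) = 0 \<and>
   y (C1 Rt Lt) + y (C1 Rt Rt) + y (C2 Rt Rt) = 0 \<and>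
   y (DB Lt) + y (BD1 Lt) + y (BD2 Lt) = 0 \<and>
   y (DB Rt) + y (BD1 Rt) + y (BD2 Rt) = 0"
proof
  assume "y \<in> span_list dias_centroid_sq0_rels"
  then have "\<exists>c. y = (\<lambda>t. \<Sum>i<length (dias_centroid_sq0_rels :: 'k wt2 list). c i * (dias_centroid_sq0_rels ! i) t)"
    unfolding span_list_def by simp
  then obtain c where y: "y = (\<lambda>t. \<Sum>i<length (dias_centroid_sq0_rels :: 'k wt2 list). c i * (dias_centroid_sq0_rels ! i) t)"
    by (elim exE) (rule that)
  show "y (C1 Lt Lt) + y (C2 Lt Lt) + y (C2 Lt Rt) = 0 \<and>
   y (C1 Lt Rt) + y (C2 Rt Lt) = 0 \<and>
   y (C1 Rt Lt) + y (C1 Rt Rt) + y (C2 Rt Rt) = 0 \<and>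
   y (DB Lt) + y (BD1 Lt) + y (BD2 Lt) = 0 \<and>
   y (DB Rt) + y (BD1 Rt) + y (BD2 Rt) = 0"
    unfolding y by (simp add: dias_centroid_sq0_rels_def basis_vec_def eval_nat_numeral)
next
  assume E: "y (C1 Lt Lt) + y (C2 Lt Lt) + y (C2 Lt Rt) = 0 \<and>
   y (C1 Lt Rt) + y (C2 Rt Lt) = 0 \<and>
   y (C1 Rt Lt) + y (C1 Rt Rt) + y (C2 Rt Rt) = 0 \<and>
   y (DB Lt) + y (BD1 Lt) + y (BD2 Lt) = 0 \<and>
   y (DB Rt) + y (BD1 Rt) + y (BD2 Rt) = 0"
  have S1: "y (C1 Lt Lt) = - y (C2 Lt Lt) - y (C2 Lt Rt)" using E solve3 by blast
  have S2: "y (C1 Lt Rt) = - y (C2 Rt Lt)" using E solve2 by blast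
  have S3: "y (C2 Rt Rt) = - y (C1 Rt Lt) - y (C1 Rt Rt)"
    using E solve3[of "y (C2 Rt Rt)" "y (C1 Rt Lt)" "y (C1 Rt Rt)"] by (simp add: ac_simps)
  have S4: "y (DB Lt) = - y (BD1 Lt) - y (BD2 Lt)" using E solve3 by blast
  have S5: "y (DB Rt) = - y (BD1 Rt) - y (BD2 Rt)" using E solve3 by blast
  define cs where "cs = [- y (C2 Lt Lt), - y (C2 Lt Rt), - y (C2 Rt Lt), y (C1 Rt Lt), y (C1 Rt Rt),
     - y (BD1 Lt), - y (BD2 Lt), - y (BD1 Rt), - y (BD2 Rt), y DD]"
  have "\<forall>t. y t = (\<Sum>i<length (dias_centroid_sq0_rels :: 'k wt2 list). (\<lambda>i. cs ! i) i * (dias_centroid_sq0_rels ! i) t)"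
    unfolding tree_all
    by (simp add: cs_def dias_centroid_sq0_rels_def basis_vec_def eval_nat_numeral S1 S2 S3 S4 S5)
  then have "y = (\<lambda>t. \<Sum>i<length (dias_centroid_sq0_rels :: 'k wt2 list). (\<lambda>i. cs ! i) i * (dias_centroid_sq0_rels ! i) t)"
    by (intro ext) blast
  then show "y \<in> span_list dias_centroid_sq0_rels"
    unfolding span_list_def by blast
qed

theorem proposition3p23:
  shows "koszul_dual_rels (diffdend_rels :: 'k::field wt2 list)
           = span_list dias_centroid_sq0_rels"
  by (rule set_eqI, simp only: orth_char span_char)

end
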